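(* Let $X,Y\subseteq\mathbb{P}^n$ be real closed subschemes with $X\cap Y=\operatorname{Span}(X)\cap\operatorname{Span}(Y)$. Then the Hankel spectrahedron $\Sigma_{X\cup Y}^*$ is the convex hull of $\Sigma_X^*\cup\Sigma_Y^*$, and both $\Sigma_X^*$ and $\Sigma_Y^*$ are faces of $\Sigma_{X\cup Y}^*$.
   Context: For a subscheme $Z\subseteq\mathbb{P}^n$ with ideal $I(Z)$, $\mathbb{R}[Z]=\mathbb{R}[x_0,\dots,x_n]/I(Z)$, $\Sigma_Z\subseteq\mathbb{R}[Z]_2$ is the cone of sums of squares of elements of $\mathbb{R}[Z]_1$ and $\Sigma_Z^*\subseteq\mathbb{R}[Z]_2^*$ its dual cone (the Hankel spectrahedron). $X\cup Y$ is defined by $I(X)\cap I(Y)$, and $\Sigma_X^*,\Sigma_Y^*$ are regarded as subsets of $\mathbb{R}[X\cup Y]_2^*$ via the duals of the restriction (quotient) maps $\pi_X:\mathbb{R}[X\cup Y]_2\to\mathbb{R}[X]_2$ and $\pi_Y:\mathbb{R}[X\cup Y]_2\to\mathbb{R}[Y]_2$. $\operatorname{Span}(Z)$ is the projective linear span of $Z$. *)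

theory Defs
  imports "HOL-Analysis.Analysis" "HOL-Library.Poly_Mapping" "HOL-Analysis.Finite_Function_Topology"
begin

text \<open>Real polynomials in the variables x_0, ..., x_n, represented as finitely supported
  maps from monomials (exponent vectors) to real coefficients.
  The multiplication is the library's convolution product on poly_mapping.\<close>

type_synonym monom = "nat \<Rightarrow>\<^sub>0 nat"
type_synonym rpoly = "monom \<Rightarrow>\<^sub>0 real"

definition mdeg :: "monom \<Rightarrow> nat" where
  "mdeg m = (\<Sum>i\<in>Poly_Mapping.keys m. Poly_Mapping.lookup m i)"

definition Rn :: "nat \<Rightarrow> rpoly set" where
  "Rn n = {p. \<forall>m\<in>Poly_Mapping.keys p. Poly_Mapping.keys m \<subseteq> {..n}}"

definition homog :: "nat \<Rightarrow> nat \<Rightarrow> rpoly set" where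
  "homog n d = {p. \<forall>m\<in>Poly_Mapping.keys p. Poly_Mapping.keys m \<subseteq> {..n} \<and> mdeg m = d}"

definition hcomp :: "nat \<Rightarrow> rpoly \<Rightarrow> rpoly" where
  "hcomp d f = (\<Sum>m\<in>{m\<in>Poly_Mapping.keys f. mdeg m = d}. Poly_Mapping.single m (Poly_Mapping.lookup f m))"

definition is_ideal :: "nat \<Rightarrow> rpoly set \<Rightarrow> bool" where
  "is_ideal n J \<longleftrightarrow> J \<subseteq> Rn n \<and> 0 \<in> J \<and> (\<forall>a\<in>J. \<forall>b\<in>J. a + b \<in> J)
      \<and> (\<forall>a\<in>J. \<forall>g\<in>Rn n. g * a \<in> J)"

definition hom_ideal :: "nat \<Rightarrow> rpoly set \<Rightarrow> bool" where
  "hom_ideal n J \<longleftrightarrow> is_ideal n J \<and> (\<forall>f\<in>J. \<forall>d. hcomp d f \<in> J)"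

definition ideal_gen :: "nat \<Rightarrow> rpoly set \<Rightarrow> rpoly set" where
  "ideal_gen n S = \<Inter>{J. is_ideal n J \<and> S \<subseteq> J}"

text \<open>Saturation I : (x_0,...,x_n)^\<infinity> with respect to the irrelevant ideal.\<close>
definition sat :: "nat \<Rightarrow> rpoly set \<Rightarrow> rpoly set" where
  "sat n I = {f\<in>Rn n. \<exists>k. \<forall>g\<in>homog n k. g * f \<in> I}"

text \<open>A real closed subscheme Z of P^n, given by its ideal I(Z): a saturated homogeneous ideal.\<close>
definition closed_subscheme :: "nat \<Rightarrow> rpoly set \<Rightarrow> bool" where
  "closed_subscheme n I \<longleftrightarrow> hom_ideal n I \<and> sat n I = I"

definition ideal_sum :: "rpoly set \<Rightarrow> rpoly set \<Rightarrow> rpoly set" where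
  "ideal_sum I J = {a + b |a b. a \<in> I \<and> b \<in> J}"

text \<open>Ideal of the scheme-theoretic intersection X \<inter> Y.\<close>
definition inter_ideal :: "nat \<Rightarrow> rpoly set \<Rightarrow> rpoly set \<Rightarrow> rpoly set" where
  "inter_ideal n I J = sat n (ideal_sum I J)"

text \<open>Ideal of Span(Z): generated by the linear forms in I(Z).\<close>
definition span_ideal :: "nat \<Rightarrow> rpoly set \<Rightarrow> rpoly set" where
  "span_ideal n I = sat n (ideal_gen n (I \<inter> homog n 1))"

text \<open>Linear functionals on R_2 in coordinates: L is a finitely supported vector of
  values on the degree-2 monomials, and pairing L p = L(p).\<close>
definition pairing :: "rpoly \<Rightarrow> rpoly \<Rightarrow> real" where
  "pairing L p = (\<Sum>m\<in>Poly_Mapping.keys p. Poly_Mapping.lookup p m * Poly_Mapping.lookup L m)"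

text \<open>R[Z]_2^*, identified (via the dual of the quotient map R_2 \<rightarrow> R[Z]_2) with the
  linear functionals on R_2 vanishing on I(Z)_2.\<close>
definition quad_dual :: "nat \<Rightarrow> rpoly set \<Rightarrow> rpoly set" where
  "quad_dual n I = {L. (\<forall>m\<in>Poly_Mapping.keys L. Poly_Mapping.keys m \<subseteq> {..n} \<and> mdeg m = 2)
                       \<and> (\<forall>q\<in>I \<inter> homog n 2. pairing L q = 0)}"

text \<open>Preimage in R_2 of the cone \<Sigma>_Z of sums of squares of elements of R[Z]_1.\<close>
definition sos_cone :: "nat \<Rightarrow> rpoly set \<Rightarrow> rpoly set" where
  "sos_cone n I = {q\<in>homog n 2. \<exists>fs. set fs \<subseteq> homog n 1 \<and> q - (\<Sum>f\<leftarrow>fs. f * f) \<in> I}"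

definition hankel :: "nat \<Rightarrow> rpoly set \<Rightarrow> rpoly set" where
  "hankel n I = {L\<in>quad_dual n I. \<forall>q\<in>sos_cone n I. pairing L q \<ge> 0}"

end

theory Submission
  imports Defs
begin


abbreviation lk where "lk \<equiv> Poly_Mapping.lookup"
abbreviation ks where "ks \<equiv> Poly_Mapping.keys"
abbreviation sg where "sg \<equiv> Poly_Mapping.single"

lemma lookup_minus_nat_: "lk ((a::monom) - b) k = lk a k - lk b k"
  by transfer simp

lemma lookup_scaleR: "lk (c *\<^sub>R (p::rpoly)) m = c * lk p m"
  by (simp add: scaleR_poly_mapping_def)

lemma keys_scaleR: "ks (c *\<^sub>R (p::rpoly)) \<subseteq> ks p"
  by (auto simp: in_keys_iff lookup_scaleR)

lemma scaleR_single0: "c *\<^sub>R (p::rpoly) = sg 0 c * p"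
  by (rule poly_mapping_eqI) (simp add: mult_map_scale_conv_mult[symmetric] lookup_scaleR map.rep_eq when_def)

lemma scaleR_mult_left: "(c *\<^sub>R (p::rpoly)) * q = c *\<^sub>R (p * q)"
  by (simp add: scaleR_single0 mult.assoc)

lemma scaleR_mult_right: "(p::rpoly) * (c *\<^sub>R q) = c *\<^sub>R (p * q)"
  by (simp add: scaleR_single0 mult.left_commute)

lemma poly_decomp_superset:
  assumes "finite F" "ks (p::'a \<Rightarrow>\<^sub>0 'b::comm_monoid_add) \<subseteq> F"
  shows "p = (\<Sum>m\<in>F. sg m (lk p m))"
proof (rule poly_mapping_eqI)
  fix k
  have "lk (\<Sum>m\<in>F. sg m (lk p m)) k = (\<Sum>m\<in>F. (lk p m when m = k))"
    by (simp add: lookup_sum lookup_single)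
  also have "\<dots> = lk p k"
  proof (cases "k \<in> F")
    case True
    then show ?thesis by (simp add: when_def assms(1) sum.delta)
  next
    case False
    then have "k \<notin> ks p" using assms by auto
    then show ?thesis using False by (simp add: when_def in_keys_iff sum.neutral)
  qed
  finally show "lk p k = lk (\<Sum>m\<in>F. sg m (lk p m)) k" by simp
qed

lemma poly_decomp: "p = (\<Sum>m\<in>ks p. sg m (lk (p::'a \<Rightarrow>\<^sub>0 'b::comm_monoid_add) m))"
  by (rule poly_decomp_superset) auto

lemma mdeg_superset:
  assumes "finite F" "ks m \<subseteq> F"
  shows "mdeg m = (\<Sum>i\<in>F. lk m i)"
  unfolding mdeg_def by (rule sum.mono_neutral_left) (use assms in \<open>auto simp: in_keys_iff\<close>)

lemma keys_add_nat: "ks ((a::monom) + b) = ks a \<union> ks b"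
  by (auto simp: in_keys_iff lookup_add)

lemma mdeg_add: "mdeg ((a::monom) + b) = mdeg a + mdeg b"
proof -
  let ?F = "ks a \<union> ks b"
  have "mdeg (a+b) = (\<Sum>i\<in>?F. lk (a+b) i)" by (rule mdeg_superset) (auto simp: keys_add_nat)
  also have "\<dots> = (\<Sum>i\<in>?F. lk a i) + (\<Sum>i\<in>?F. lk b i)" by (simp add: lookup_add sum.distrib)
  also have "\<dots> = mdeg a + mdeg b"
    by (subst (1 2) mdeg_superset[where F="?F"]) auto
  finally show ?thesis .
qed

lemma mdeg_single: "mdeg (sg i k) = k"
  unfolding mdeg_def by (cases "k = 0") auto

lemma mdeg_zero: "mdeg 0 = 0" unfolding mdeg_def by simp

lemma mdeg_eq_0: "mdeg m = 0 \<Longrightarrow> m = 0"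
  unfolding mdeg_def by (metis (no_types, lifting) finite_keys in_keys_iff keys_eq_empty sum_eq_0_iff ex_in_conv)

lemma mdeg_Suc:
  assumes "mdeg m = Suc d"
  shows "\<exists>i m'. i \<in> ks m \<and> m = sg i 1 + m' \<and> mdeg m' = d \<and> ks m' \<subseteq> ks m"
proof -
  have "m \<noteq> 0" using assms mdeg_zero by auto
  then obtain i where i: "i \<in> ks m" by (metis keys_eq_empty ex_in_conv)
  define m' where "m' = m - sg i 1"
  have lm: "lk m' k = lk m k - (1 when i = k)" for k
    unfolding m'_def by (simp add: lookup_minus_nat_ lookup_single)
  have eq: "m = sg i 1 + m'"
    by (rule poly_mapping_eqI) (use i in \<open>auto simp: lookup_add lm lookup_single when_def in_keys_iff\<close>)
  have "mdeg m = 1 + mdeg m'" by (subst eq) (simp add: mdeg_add mdeg_single)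
  then have "mdeg m' = d" using assms by simp
  moreover have "ks m' \<subseteq> ks m" by (auto simp: in_keys_iff lm)
  ultimately show ?thesis using i eq by blast
qed



definition var :: "nat \<Rightarrow> rpoly" where "var i = sg (sg i 1) 1"
definition mon :: "nat \<Rightarrow> nat \<Rightarrow> monom" where "mon i j = sg i 1 + sg j 1"
definition cf :: "rpoly \<Rightarrow> nat \<Rightarrow> real" where "cf f i = lk f (sg i 1)"
definition qm :: "rpoly \<Rightarrow> nat \<Rightarrow> nat \<Rightarrow> real" where
  "qm q i j = (if i = j then lk q (mon i i) else lk q (mon i j) / 2)"

lemma single_scaleR: "c *\<^sub>R sg (m::monom) (1::real) = sg m c"
proof (rule poly_mapping_eqI)
  fix k show "lk (c *\<^sub>R sg (m::monom) (1::real)) k = lk (sg m c) k"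
    by (simp only: lookup_scaleR lookup_single when_def) simp
qed

lemma single_nat_inj: "sg i (n::nat) = sg j n \<longleftrightarrow> i = j \<or> n = 0"
  by (metis lookup_single_eq lookup_single_not_eq single_zero)

lemma mon_comm: "mon i j = mon j i" by (simp add: mon_def add.commute)

lemma lookup_mon: "lk (mon i j) k = (1 when k = i) + (1 when k = j)"
  by (auto simp: mon_def lookup_add lookup_single when_def)

lemma mon_eq_iff: "mon i j = mon a b \<longleftrightarrow> (i = a \<and> j = b) \<or> (i = b \<and> j = a)"
proof
  assume h: "mon i j = mon a b"
  have e: "\<And>k. lk (mon i j) k = lk (mon a b) k" using h by simp
  from e[of i] have "i = a \<or> i = b" by (auto simp: lookup_mon when_def split: if_splits)
  then show "(i = a \<and> j = b) \<or> (i = b \<and> j = a)"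
  proof
    assume "i = a"
    with e[of j] e[of b] show ?thesis by (auto simp: lookup_mon when_def split: if_splits)
  next
    assume "i = b"
    with e[of j] e[of a] show ?thesis by (auto simp: lookup_mon when_def split: if_splits)
  qed
qed (auto simp: mon_comm)

lemma keys_mon: "ks (mon i j) = {i, j}"
  by (auto simp: in_keys_iff lookup_mon when_def split: if_splits)

lemma mdeg_mon: "mdeg (mon i j) = 2"
  by (simp add: mon_def mdeg_add mdeg_single)

lemma deg1_char:
  assumes "ks m \<subseteq> {..n}" "mdeg m = 1"
  shows "\<exists>i\<le>n. m = sg i 1"
proof -
  obtain i m' where "i \<in> ks m" "m = sg i 1 + m'" "mdeg m' = 0"
    using mdeg_Suc[of m 0] assms by auto
  then show ?thesis using assms mdeg_eq_0 by auto
qed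

lemma deg2_char:
  assumes "ks m \<subseteq> {..n}" "mdeg m = 2"
  shows "\<exists>i\<le>n. \<exists>j\<le>n. m = mon i j"
proof -
  obtain i m' where 1: "i \<in> ks m" "m = sg i 1 + m'" "mdeg m' = 1" "ks m' \<subseteq> ks m"
    using mdeg_Suc[of m 1] assms by (auto simp: numeral_2_eq_2)
  obtain j where "j \<le> n" "m' = sg j 1" using deg1_char[of m' n] 1 assms by auto
  then show ?thesis using 1 assms by (auto simp: mon_def)
qed

lemma homog_iff: "p \<in> homog n d \<longleftrightarrow> (\<forall>m\<in>ks p. ks m \<subseteq> {..n} \<and> mdeg m = d)"
  by (simp add: homog_def)

lemma homog_zero: "0 \<in> homog n d" by (simp add: homog_def)

lemma homog_add: "p \<in> homog n d \<Longrightarrow> q \<in> homog n d \<Longrightarrow> p + q \<in> homog n d"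
  unfolding homog_def using keys_add[of p q] by blast

lemma homog_scaleR: "p \<in> homog n d \<Longrightarrow> c *\<^sub>R p \<in> homog n d"
  unfolding homog_def using keys_scaleR[of c p] by blast

lemma homog_uminus: "p \<in> homog n d \<Longrightarrow> - p \<in> homog n d"
  unfolding homog_def by simp

lemma homog_diff: "p \<in> homog n d \<Longrightarrow> q \<in> homog n d \<Longrightarrow> p - q \<in> homog n d"
  using homog_add[of p n d "-q"] homog_uminus by simp

lemma homog_sum: "(\<And>x. x \<in> A \<Longrightarrow> f x \<in> homog n d) \<Longrightarrow> sum f A \<in> homog n d"
  by (induction A rule: infinite_finite_induct) (auto simp: homog_zero homog_add)

lemma homog_single: "ks m \<subseteq> {..n} \<Longrightarrow> mdeg m = d \<Longrightarrow> sg m c \<in> homog n d"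
  by (simp add: homog_def)

lemma homog_Rn: "homog n d \<subseteq> Rn n" by (auto simp: homog_def Rn_def)

lemma mon_homog: "i \<le> n \<Longrightarrow> j \<le> n \<Longrightarrow> sg (mon i j) c \<in> homog n 2"
  by (rule homog_single) (auto simp: keys_mon mdeg_mon)

lemma var_homog: "i \<le> n \<Longrightarrow> var i \<in> homog n 1"
  unfolding var_def by (rule homog_single) (auto simp: mdeg_single)

lemma var_mult: "var i * var j = sg (mon i j) 1"
  by (simp add: var_def mon_def mult_single)

lemma hom1_expand:
  assumes "f \<in> homog n 1"
  shows "f = (\<Sum>i\<le>n. cf f i *\<^sub>R var i)"
proof -
  have sub: "ks f \<subseteq> (\<lambda>i. sg i 1) ` {..n}"
    using assms deg1_char unfolding homog_def by blast
  have inj: "inj_on (\<lambda>i. sg i (1::nat)) {..n}" by (auto simp: inj_on_def single_nat_inj)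
  have "f = (\<Sum>m\<in>(\<lambda>i. sg i 1) ` {..n}. sg m (lk f m))"
    by (rule poly_decomp_superset[OF _ sub]) simp
  also have "\<dots> = (\<Sum>i\<le>n. sg (sg i 1) (lk f (sg i 1)))" by (simp only: sum.reindex[OF inj] comp_def)
  also have "\<dots> = (\<Sum>i\<le>n. cf f i *\<^sub>R var i)" by (simp add: cf_def var_def single_scaleR)
  finally show ?thesis .
qed

lemma prod_expand:
  assumes "f \<in> homog n 1" "g \<in> homog n 1"
  shows "f * g = (\<Sum>i\<le>n. \<Sum>j\<le>n. (cf f i * cf g j) *\<^sub>R sg (mon i j) 1)"
proof -
  have "f * g = (\<Sum>i\<le>n. cf f i *\<^sub>R var i) * (\<Sum>j\<le>n. cf g j *\<^sub>R var j)"
    using hom1_expand assms by metis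
  also have "\<dots> = (\<Sum>i\<le>n. \<Sum>j\<le>n. (cf f i *\<^sub>R var i) * (cf g j *\<^sub>R var j))"
    by (simp add: sum_distrib_left sum_distrib_right, subst sum.swap, rule refl)
  also have "\<dots> = (\<Sum>i\<le>n. \<Sum>j\<le>n. (cf f i * cf g j) *\<^sub>R sg (mon i j) 1)"
    by (simp add: scaleR_mult_left scaleR_mult_right var_mult mult.commute)
  finally show ?thesis .
qed

lemma prod_homog: "f \<in> homog n 1 \<Longrightarrow> g \<in> homog n 1 \<Longrightarrow> f * g \<in> homog n 2"
  by (subst prod_expand[of f n g]) (auto intro!: homog_sum homog_scaleR mon_homog)

lemma sum_pairs_sym:
  fixes f :: "nat \<Rightarrow> nat \<Rightarrow> real"
  assumes "a \<in> A" "b \<in> A" "finite A"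
  shows "(\<Sum>i\<in>A. \<Sum>j\<in>A. if (i = a \<and> j = b) \<or> (i = b \<and> j = a) then f i j else 0)
         = (if a = b then f a a else f a b + f b a)"
proof -
  have "(\<Sum>i\<in>A. \<Sum>j\<in>A. if (i = a \<and> j = b) \<or> (i = b \<and> j = a) then f i j else 0)
     = (\<Sum>i\<in>A. (if i = a then f a b else 0) + (if i = b \<and> a \<noteq> b then f b a else 0))"
  proof (intro sum.cong refl)
    fix i assume "i \<in> A"
    show "(\<Sum>j\<in>A. if (i = a \<and> j = b) \<or> (i = b \<and> j = a) then f i j else 0)
       = (if i = a then f a b else 0) + (if i = b \<and> a \<noteq> b then f b a else 0)"
    proof (cases "i = a")
      case True
      then show ?thesis using assms by (cases "a = b") (auto simp: sum.delta)
    next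
      case False
      then show ?thesis using assms by (cases "i = b") (auto simp: sum.delta)
    qed
  qed
  also have "\<dots> = (if a = b then f a a else f a b + f b a)"
    using assms by (simp add: sum.distrib sum.delta)
  finally show ?thesis .
qed

lemma hom2_expand:
  assumes "q \<in> homog n 2"
  shows "q = (\<Sum>i\<le>n. \<Sum>j\<le>n. qm q i j *\<^sub>R sg (mon i j) 1)"
proof (rule poly_mapping_eqI)
  fix k
  have R: "lk (\<Sum>i\<le>n. \<Sum>j\<le>n. qm q i j *\<^sub>R sg (mon i j) 1) k
      = (\<Sum>i\<le>n. \<Sum>j\<le>n. if mon i j = k then qm q i j else 0)"
    by (simp add: lookup_sum single_scaleR lookup_single when_def)
  show "lk q k = lk (\<Sum>i\<le>n. \<Sum>j\<le>n. qm q i j *\<^sub>R sg (mon i j) 1) k"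
  proof (cases "\<exists>a\<le>n. \<exists>b\<le>n. k = mon a b")
    case True
    then obtain a b where ab: "a \<le> n" "b \<le> n" "k = mon a b" by auto
    have "(\<Sum>i\<le>n. \<Sum>j\<le>n. if mon i j = k then qm q i j else 0)
        = (\<Sum>i\<le>n. \<Sum>j\<le>n. if (i = a \<and> j = b) \<or> (i = b \<and> j = a) then qm q i j else 0)"
      using ab by (simp add: mon_eq_iff)
    also have "\<dots> = (if a = b then qm q a a else qm q a b + qm q b a)"
      using ab by (intro sum_pairs_sym) auto
    also have "\<dots> = lk q k" using ab by (auto simp: qm_def mon_comm)
    finally show ?thesis using R by simp
  next
    case False
    then have "k \<notin> ks q" using assms deg2_char unfolding homog_def by blast
    moreover have "(\<Sum>i\<le>n. \<Sum>j\<le>n. if mon i j = k then qm q i j else 0) = 0"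
      using False by (intro sum.neutral ballI) auto
    ultimately show ?thesis using R by (simp add: in_keys_iff)
  qed
qed

lemma qm_sym: "qm q i j = qm q j i" by (simp add: qm_def mon_comm)



definition gm :: "rpoly \<Rightarrow> nat \<Rightarrow> nat \<Rightarrow> real" where "gm L i j = lk L (mon i j)"

lemma gm_sym: "gm L i j = gm L j i" by (simp add: gm_def mon_comm)

lemma pairing_superset:
  assumes "finite F" "ks L \<subseteq> F"
  shows "pairing L p = (\<Sum>m\<in>F. lk p m * lk L m)"
proof -
  have "pairing L p = (\<Sum>m\<in>ks p \<union> F. lk p m * lk L m)"
    unfolding pairing_def by (rule sum.mono_neutral_left) (use assms in \<open>auto simp: in_keys_iff\<close>)
  also have "\<dots> = (\<Sum>m\<in>F. lk p m * lk L m)"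
    by (rule sum.mono_neutral_right) (use assms in \<open>auto simp: in_keys_iff\<close>)
  finally show ?thesis .
qed

lemma pairing_alt: "pairing L p = (\<Sum>m\<in>ks L. lk p m * lk L m)"
  by (rule pairing_superset) auto

lemma linear_pairing: "linear (pairing L)"
  by (rule linearI) (simp_all add: pairing_alt lookup_add lookup_scaleR distrib_right sum.distrib sum_distrib_left mult.assoc)

lemma pairing_add_left: "pairing (L1 + L2) p = pairing L1 p + pairing L2 p"
  by (simp add: pairing_def lookup_add distrib_left sum.distrib)

lemma pairing_diff_left: "pairing (L1 - L2) p = pairing L1 p - pairing L2 p"
  by (simp add: pairing_def lookup_minus right_diff_distrib sum_subtractf)

lemma pairing_scaleR_left: "pairing (c *\<^sub>R L) p = c * pairing L p"
  by (simp add: pairing_def lookup_scaleR sum_distrib_left mult.left_commute)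

lemma pairing_single: "pairing L (c *\<^sub>R sg m 1) = c * lk L m"
  by (simp add: single_scaleR pairing_def)

lemma pairing_sum: "pairing L (sum f A) = (\<Sum>x\<in>A. pairing L (f x))"
  using linear_sum[OF linear_pairing] by blast

lemma pairing_hom2:
  assumes "q \<in> homog n 2"
  shows "pairing L q = (\<Sum>i\<le>n. \<Sum>j\<le>n. qm q i j * gm L i j)"
  by (subst hom2_expand[OF assms]) (simp add: pairing_sum pairing_single gm_def)

lemma pairing_prod:
  assumes "f \<in> homog n 1" "g \<in> homog n 1"
  shows "pairing L (f * g) = (\<Sum>i\<le>n. \<Sum>j\<le>n. cf f i * cf g j * gm L i j)"
  by (subst prod_expand[OF assms]) (simp add: pairing_sum pairing_single gm_def)

definition mev :: "monom \<Rightarrow> (nat \<Rightarrow> real) \<Rightarrow> real" where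
  "mev m z = (\<Prod>i\<in>ks m. z i ^ lk m i)"
definition evalp :: "rpoly \<Rightarrow> (nat \<Rightarrow> real) \<Rightarrow> real" where
  "evalp p z = (\<Sum>m\<in>ks p. lk p m * mev m z)"

lemma mev_superset:
  assumes "finite F" "ks m \<subseteq> F"
  shows "mev m z = (\<Prod>i\<in>F. z i ^ lk m i)"
  unfolding mev_def by (rule prod.mono_neutral_left) (use assms in \<open>auto simp: in_keys_iff\<close>)

lemma mev_add: "mev (a + b) z = mev a z * mev b z"
proof -
  let ?F = "ks a \<union> ks b"
  have "mev (a+b) z = (\<Prod>i\<in>?F. z i ^ lk (a+b) i)" by (rule mev_superset) (auto simp: keys_add_nat)
  also have "\<dots> = (\<Prod>i\<in>?F. z i ^ lk a i) * (\<Prod>i\<in>?F. z i ^ lk b i)"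
    by (simp add: lookup_add power_add prod.distrib)
  also have "\<dots> = mev a z * mev b z"
    by (subst (1 2) mev_superset[where F="?F"]) auto
  finally show ?thesis .
qed

lemma mev_single: "mev (sg i k) z = z i ^ k"
  unfolding mev_def by (cases "k = 0") auto

lemma mev_mon: "mev (mon i j) z = z i * z j"
  by (simp add: mon_def mev_add mev_single)

lemma evalp_superset:
  assumes "finite F" "ks p \<subseteq> F"
  shows "evalp p z = (\<Sum>m\<in>F. lk p m * mev m z)"
  unfolding evalp_def by (rule sum.mono_neutral_left) (use assms in \<open>auto simp: in_keys_iff\<close>)

lemma evalp_add: "evalp (p + q) z = evalp p z + evalp q z"
proof -
  let ?F = "ks p \<union> ks q"
  have "evalp (p+q) z = (\<Sum>m\<in>?F. lk (p+q) m * mev m z)"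
    by (rule evalp_superset) (use keys_add[of p q] in auto)
  also have "\<dots> = (\<Sum>m\<in>?F. lk p m * mev m z) + (\<Sum>m\<in>?F. lk q m * mev m z)"
    by (simp add: lookup_add distrib_right sum.distrib)
  also have "\<dots> = evalp p z + evalp q z"
    by (subst (1 2) evalp_superset[where F="?F"]) auto
  finally show ?thesis .
qed

lemma evalp_scaleR: "evalp (c *\<^sub>R p) z = c * evalp p z"
proof -
  have "evalp (c *\<^sub>R p) z = (\<Sum>m\<in>ks p. lk (c *\<^sub>R p) m * mev m z)"
    by (rule evalp_superset) (auto simp: keys_scaleR)
  then show ?thesis by (simp add: evalp_def lookup_scaleR sum_distrib_left mult.assoc)
qed

lemma linear_evalp: "linear (\<lambda>p. evalp p z)"
  by (rule linearI) (simp_all add: evalp_add evalp_scaleR)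

lemma evalp_sum: "evalp (sum f A) z = (\<Sum>x\<in>A. evalp (f x) z)"
  using linear_sum[OF linear_evalp] by blast

lemma evalp_single: "evalp (sg m c) z = c * mev m z"
  by (simp add: evalp_def)

lemma evalp_zero: "evalp 0 z = 0" by (simp add: evalp_def)

lemma evalp_mult: "evalp (p * q) z = evalp p z * evalp q z"
proof -
  have "p * q = (\<Sum>a\<in>ks p. sg a (lk p a)) * (\<Sum>b\<in>ks q. sg b (lk q b))"
    using poly_decomp[of p] poly_decomp[of q] by simp
  also have "\<dots> = (\<Sum>a\<in>ks p. \<Sum>b\<in>ks q. sg (a + b) (lk p a * lk q b))"
    by (simp add: sum_distrib_left sum_distrib_right mult_single, subst sum.swap, rule refl)
  finally have "evalp (p * q) z = (\<Sum>a\<in>ks p. \<Sum>b\<in>ks q. lk p a * lk q b * (mev a z * mev b z))"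
    by (simp add: evalp_sum evalp_single mev_add)
  also have "\<dots> = (\<Sum>a\<in>ks p. (lk p a * mev a z) * (\<Sum>b\<in>ks q. lk q b * mev b z))"
    by (simp add: sum_distrib_left mult_ac)
  also have "\<dots> = evalp p z * evalp q z"
    by (simp add: evalp_def sum_distrib_right)
  finally show ?thesis .
qed

lemma evalp_hom2:
  assumes "q \<in> homog n 2"
  shows "evalp q z = (\<Sum>i\<le>n. \<Sum>j\<le>n. qm q i j * (z i * z j))"
  by (subst hom2_expand[OF assms]) (simp add: evalp_sum single_scaleR evalp_single mev_mon)

lemma evalp_hom1:
  assumes "f \<in> homog n 1"
  shows "evalp f z = (\<Sum>i\<le>n. cf f i * z i)"
  by (subst hom1_expand[OF assms]) (simp add: evalp_sum var_def single_scaleR evalp_single mev_single)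



definition bil :: "nat \<Rightarrow> (nat \<Rightarrow> nat \<Rightarrow> real) \<Rightarrow> (nat \<Rightarrow> real) \<Rightarrow> (nat \<Rightarrow> real) \<Rightarrow> real" where
  "bil n G c d = (\<Sum>i\<le>n. \<Sum>j\<le>n. c i * G i j * d j)"
definition psd :: "nat \<Rightarrow> (nat \<Rightarrow> nat \<Rightarrow> real) \<Rightarrow> bool" where
  "psd n G \<longleftrightarrow> (\<forall>c. 0 \<le> bil n G c c)"
definition symm :: "nat \<Rightarrow> (nat \<Rightarrow> nat \<Rightarrow> real) \<Rightarrow> bool" where
  "symm n G \<longleftrightarrow> (\<forall>i\<le>n. \<forall>j\<le>n. G i j = G j i)"
definition kills :: "nat \<Rightarrow> (nat \<Rightarrow> nat \<Rightarrow> real) \<Rightarrow> (nat \<Rightarrow> real) \<Rightarrow> bool" where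
  "kills n G s \<longleftrightarrow> (\<forall>j\<le>n. (\<Sum>i\<le>n. s i * G i j) = 0)"
definition trp :: "nat \<Rightarrow> (nat \<Rightarrow> nat \<Rightarrow> real) \<Rightarrow> (nat \<Rightarrow> nat \<Rightarrow> real) \<Rightarrow> real" where
  "trp n G Q = (\<Sum>i\<le>n. \<Sum>j\<le>n. G i j * Q i j)"

lemma bil_addL: "bil n G (\<lambda>i. a i + b i) d = bil n G a d + bil n G b d"
  by (simp add: bil_def algebra_simps sum.distrib)
lemma bil_addR: "bil n G d (\<lambda>i. a i + b i) = bil n G d a + bil n G d b"
  by (simp add: bil_def algebra_simps sum.distrib)
lemma bil_scaleL: "bil n G (\<lambda>i. t * a i) d = t * bil n G a d"
  by (simp add: bil_def algebra_simps sum_distrib_left)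
lemma bil_scaleR: "bil n G d (\<lambda>i. t * a i) = t * bil n G d a"
  by (simp add: bil_def algebra_simps sum_distrib_left)
lemma bil_swap: "symm n G \<Longrightarrow> bil n G a b = bil n G b a"
  unfolding bil_def symm_def by (subst sum.swap) (auto intro!: sum.cong simp: mult_ac)
lemma bil_addG: "bil n (\<lambda>i j. G i j + H i j) c d = bil n G c d + bil n H c d"
  by (simp add: bil_def algebra_simps sum.distrib)
lemma bil_diffG: "bil n (\<lambda>i j. G i j - H i j) c d = bil n G c d - bil n H c d"
  by (simp add: bil_def algebra_simps sum_subtractf)
lemma bil_rank1: "bil n (\<lambda>i j. r * (l i * l j)) c c = r * (\<Sum>i\<le>n. c i * l i)^2"
  by (simp add: bil_def power2_eq_square sum_distrib_left sum_distrib_right mult_ac)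

lemma bil_delta: "bil n G s (\<lambda>k. if k = j then 1 else 0) = (if j \<le> n then (\<Sum>i\<le>n. s i * G i j) else 0)"
  by (simp add: bil_def if_distrib[where f="\<lambda>x. _ * x"] sum.delta cong: if_cong)

lemma kills_iff_bil: "kills n G s \<longleftrightarrow> (\<forall>d. bil n G s d = 0)"
proof
  assume "kills n G s"
  then show "\<forall>d. bil n G s d = 0"
    unfolding kills_def bil_def by (subst sum.swap) (simp add: sum_distrib_right[symmetric] mult.commute[of _ "d _"] mult.assoc[symmetric] flip: sum_distrib_left)
next
  assume "\<forall>d. bil n G s d = 0"
  then show "kills n G s" unfolding kills_def using bil_delta by (metis)
qed

lemma aux0: assumes "(h::real) \<ge> 1" "x \<noteq> 0" shows "2 * (-x/h) * x + (-x/h)^2 * (h - 1) < 0"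
proof -
  have gp: "h > 0" using assms by simp
  have "2 * (-x/h) * x + (-x/h)^2 * (h - 1) = - (x^2 * (h + 1)) / h^2"
    using gp by (simp add: field_simps power2_eq_square)
  also have "\<dots> < 0" using assms gp by (simp add: divide_neg_pos add_pos_nonneg)
  finally show ?thesis .
qed
lemma aux: assumes "(g::real) \<ge> 0" "x \<noteq> 0" shows "2 * (-x/(g+1)) * x + (-x/(g+1))^2 * g < 0"
  using aux0[of "g+1" x] assms by simp

lemma psd_kills:
  assumes "psd n G" "symm n G" "bil n G s s = 0"
  shows "kills n G s"
proof -
  have "bil n G s d = 0" for d
  proof (rule ccontr)
    let ?x = "bil n G s d" and ?g = "bil n G d d"
    assume x: "?x \<noteq> 0"
    have g: "?g \<ge> 0" using assms(1) psd_def by blast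
    define t where "t = - ?x / (?g + 1)"
    have "0 \<le> bil n G (\<lambda>i. s i + t * d i) (\<lambda>i. s i + t * d i)" using assms(1) psd_def by blast
    also have "\<dots> = 2 * t * ?x + t^2 * ?g"
      using assms(2,3) by (simp add: bil_addL bil_addR bil_scaleL bil_scaleR bil_swap[of n G d s] power2_eq_square algebra_simps)
    also have "\<dots> < 0" unfolding t_def by (rule aux[OF g x])
    finally show False by simp
  qed
  then show ?thesis by (simp add: kills_iff_bil)
qed

lemma psd_cs:
  assumes "psd n G" "symm n G"
  shows "(bil n G b v)^2 \<le> bil n G b b * bil n G v v"
proof (cases "bil n G b b = 0")
  case True
  then have "bil n G b v = 0" using psd_kills[OF assms] kills_iff_bil by blast
  then show ?thesis using True by simp
next
  case False
  let ?x = "bil n G b v" and ?be = "bil n G b b"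
  have be: "?be > 0" using False assms(1) psd_def by (metis order_le_less)
  define t where "t = - ?x / ?be"
  have "0 \<le> bil n G (\<lambda>i. v i + t * b i) (\<lambda>i. v i + t * b i)" using assms(1) psd_def by blast
  also have "\<dots> = bil n G v v + 2 * t * ?x + t^2 * ?be"
    using assms(2) by (simp add: bil_addL bil_addR bil_scaleL bil_scaleR bil_swap[of n G v b] power2_eq_square algebra_simps)
  also have "\<dots> = bil n G v v - ?x^2 / ?be"
    using be by (simp add: t_def field_simps power2_eq_square)
  finally have "?x^2 / ?be \<le> bil n G v v" by simp
  then show ?thesis using be by (simp add: field_simps mult.commute)
qed



lemma kills_addG: "kills n G s \<Longrightarrow> kills n H s \<Longrightarrow> kills n (\<lambda>i j. G i j + H i j) s"
  by (simp add: kills_def algebra_simps sum.distrib)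
lemma kills_diffG: "kills n G s \<Longrightarrow> kills n H s \<Longrightarrow> kills n (\<lambda>i j. G i j - H i j) s"
  by (simp add: kills_def algebra_simps sum_subtractf)
lemma kills_outer: "(\<Sum>i\<le>n. s i * u i) = 0 \<Longrightarrow> kills n (\<lambda>i j. c * (u i * v j)) s"
  unfolding kills_def
proof (intro allI impI)
  fix j assume h: "(\<Sum>i\<le>n. s i * u i) = 0"
  have "(\<Sum>i\<le>n. s i * (c * (u i * v j))) = (c * v j) * (\<Sum>i\<le>n. s i * u i)"
    by (simp add: sum_distrib_left mult_ac)
  then show "(\<Sum>i\<le>n. s i * (c * (u i * v j))) = 0" using h by simp
qed
lemma psd_addG: "psd n G \<Longrightarrow> psd n H \<Longrightarrow> psd n (\<lambda>i j. G i j + H i j)"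
  by (simp add: psd_def bil_addG add_nonneg_nonneg)
lemma bil_outer: "bil n (\<lambda>i j. r * (u i * v j)) c d = r * (\<Sum>i\<le>n. c i * u i) * (\<Sum>j\<le>n. d j * v j)"
  by (simp add: bil_def sum_distrib_left sum_distrib_right mult_ac)
lemma psd_rank1: "r \<ge> 0 \<Longrightarrow> psd n (\<lambda>i j. r * (l i * l j))"
  by (simp add: psd_def bil_outer mult.assoc)
lemma symm_diff: "symm n G \<Longrightarrow> symm n H \<Longrightarrow> symm n (\<lambda>i j. G i j - H i j)"
  by (simp add: symm_def)
lemma lin_l: "(\<Sum>j\<le>n. c j * (\<Sum>i\<le>n. b i * L i j)) = bil n L b c"
  unfolding bil_def by (simp add: sum_distrib_left mult_ac, subst sum.swap, rule refl)

lemma elim: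
  assumes M2: "symm n M2"
  shows "\<And>L K. symm n L \<Longrightarrow> psd n L \<Longrightarrow> (\<forall>a\<in>SA. kills n (\<lambda>i j. L i j - M2 i j) a)
     \<Longrightarrow> (\<forall>b\<in>set bs. kills n M2 b) \<Longrightarrow> (\<forall>k\<in>K. kills n L k)
     \<Longrightarrow> \<exists>P. symm n P \<and> psd n P \<and> (\<forall>b\<in>set bs \<union> K. kills n P b) \<and> psd n (\<lambda>i j. L i j - P i j)
          \<and> (\<forall>a\<in>SA. kills n (\<lambda>i j. L i j - P i j) a)"
proof (induction bs)
  case Nil
  have "psd n (\<lambda>i j. L i j - L i j)" by (simp add: psd_def bil_def)
  moreover have "kills n (\<lambda>i j. L i j - L i j) a" for a by (simp add: kills_def)
  ultimately show ?case using Nil by auto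
next
  case (Cons b bs L K)
  let ?be = "bil n L b b"
  have be0: "?be \<ge> 0" using Cons.prems(2) psd_def by blast
  show ?case
  proof (cases "?be = 0")
    case True
    then have "kills n L b" using psd_kills Cons.prems by blast
    then have "\<forall>k\<in>insert b K. kills n L k" using Cons.prems by auto
    from Cons.IH[OF Cons.prems(1,2,3) _ this] Cons.prems(4)
    obtain P where "symm n P \<and> psd n P \<and> (\<forall>b\<in>set bs \<union> insert b K. kills n P b) \<and> psd n (\<lambda>i j. L i j - P i j)
          \<and> (\<forall>a\<in>SA. kills n (\<lambda>i j. L i j - P i j) a)" by auto
    then show ?thesis by auto
  next
    case False
    then have be: "?be > 0" using be0 by simp
    define l where "l j = (\<Sum>i\<le>n. b i * L i j)" for j
    define L' where "L' i j = L i j - (1 / ?be) * (l i * l j)" for i j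
    have Ls: "symm n L" using Cons.prems by simp
    have ll: "(\<Sum>i\<le>n. c i * l i) = bil n L b c" for c unfolding l_def by (rule lin_l)
    have bL': "bil n L' c d = bil n L c d - (1 / ?be) * bil n L b c * bil n L b d" for c d
    proof -
      have "bil n L' c d = bil n L c d - bil n (\<lambda>i j. (1 / ?be) * (l i * l j)) c d"
        unfolding L'_def by (rule bil_diffG)
      also have "bil n (\<lambda>i j. (1 / ?be) * (l i * l j)) c d = (1 / ?be) * (\<Sum>i\<le>n. c i * l i) * (\<Sum>i\<le>n. d i * l i)"
        by (rule bil_outer)
      finally show ?thesis by (simp only: ll)
    qed
    have s1: "symm n L'" using Ls by (auto simp: symm_def L'_def)
    have p1: "psd n L'"
      unfolding psd_def
    proof
      fix c
      have "bil n L' c c = bil n L c c - bil n (\<lambda>i j. (1 / ?be) * (l i * l j)) c c"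
        unfolding L'_def by (rule bil_diffG)
      also have "bil n (\<lambda>i j. (1 / ?be) * (l i * l j)) c c = (1 / ?be) * (\<Sum>i\<le>n. c i * l i) * (\<Sum>i\<le>n. c i * l i)"
        by (rule bil_outer)
      finally have "bil n L' c c = bil n L c c - (1 / ?be) * (bil n L b c)^2"
        by (simp add: ll power2_eq_square)
      moreover have "(bil n L b c)^2 \<le> ?be * bil n L c c" using psd_cs Cons.prems(2) Ls by blast
      ultimately have "0 \<le> bil n L' c c * ?be" using be by (simp add: field_simps)
      then show "0 \<le> bil n L' c c" using be by (simp add: zero_le_mult_iff)
    qed
    have la_all: "(\<Sum>i\<le>n. a i * l i) = 0" if a: "a \<in> SA" for a
    proof -
      have ka: "kills n (\<lambda>i j. L i j - M2 i j) a" using Cons.prems(3) a by blast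
      have "(\<Sum>i\<le>n. a i * l i) = bil n L b a" by (rule ll)
      also have "\<dots> = bil n (\<lambda>i j. L i j - M2 i j) b a + bil n M2 b a" by (simp add: bil_diffG)
      also have "bil n (\<lambda>i j. L i j - M2 i j) b a = bil n (\<lambda>i j. L i j - M2 i j) a b"
        by (rule bil_swap) (rule symm_diff[OF Ls M2])
      also have "\<dots> = 0" using ka kills_iff_bil by blast
      also have "bil n M2 b a = 0" using Cons.prems(4) kills_iff_bil by simp
      finally show "(\<Sum>i\<le>n. a i * l i) = 0" by simp
    qed
    have k1: "kills n (\<lambda>i j. L' i j - M2 i j) a" if a: "a \<in> SA" for a
    proof -
      have ka: "kills n (\<lambda>i j. L i j - M2 i j) a" using Cons.prems(3) a by blast
      have la: "(\<Sum>i\<le>n. a i * l i) = 0" using la_all a by blast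
      have e: "(\<lambda>i j. L' i j - M2 i j) = (\<lambda>i j. (L i j - M2 i j) - (1 / ?be) * (l i * l j))"
        by (auto simp: L'_def fun_eq_iff)
      have "kills n (\<lambda>i j. (L i j - M2 i j) - (1 / ?be) * (l i * l j)) a"
        by (rule kills_diffG[OF ka kills_outer[OF la]])
      with e show ?thesis by (simp only:)
    qed
    have k2: "\<forall>k\<in>insert b K. kills n L' k"
    proof
      fix k assume k: "k \<in> insert b K"
      have "bil n L' k d = bil n L k d - (1 / ?be) * bil n L b k * bil n L b d" for d
        by (rule bL')
      moreover have "bil n L k d - (1 / ?be) * bil n L b k * bil n L b d = 0" for d
      proof (cases "k = b")
        case True then show ?thesis using be by simp
      next
        case False
        then have "k \<in> K" using k by simp
        then have "kills n L k" using Cons.prems(5) by blast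
        then have "bil n L k d = 0" "bil n L k b = 0" using kills_iff_bil by blast+
        moreover have "bil n L b k = bil n L k b" by (rule bil_swap[OF Ls])
        ultimately show ?thesis by simp
      qed
      ultimately show "kills n L' k" by (simp add: kills_iff_bil)
    qed
    from Cons.IH[OF s1 p1 _ _ k2] k1 Cons.prems(4)
    obtain P where P: "symm n P" "psd n P" "\<forall>b\<in>set bs \<union> insert b K. kills n P b"
      "psd n (\<lambda>i j. L' i j - P i j)" "\<forall>a\<in>SA. kills n (\<lambda>i j. L' i j - P i j) a" by auto
    have eq: "(\<lambda>i j. L i j - P i j) = (\<lambda>i j. (L' i j - P i j) + (1 / ?be) * (l i * l j))"
      by (auto simp: L'_def)
    have "psd n (\<lambda>i j. L i j - P i j)"
      unfolding eq by (rule psd_addG[OF P(4) psd_rank1]) (use be in simp)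
    moreover have "kills n (\<lambda>i j. L i j - P i j) a" if "a \<in> SA" for a
    proof -
      have "(\<Sum>i\<le>n. a i * l i) = 0" using la_all that by blast
      then show ?thesis unfolding eq using kills_addG P(5) that kills_outer by blast
    qed
    ultimately show ?thesis using P by auto
  qed
qed



definition zc :: "nat \<Rightarrow> (nat \<Rightarrow> real) set \<Rightarrow> (nat \<Rightarrow> real) set" where
  "zc n SS = {z. \<forall>s\<in>SS. (\<Sum>i\<le>n. s i * z i) = 0}"

lemma trp_outer: "trp n (\<lambda>k l. c * (u k * w l)) Q = c * bil n Q u w"
  by (simp add: trp_def bil_def sum_distrib_left mult_ac)
lemma trp_addG: "trp n (\<lambda>k l. G k l + H k l) Q = trp n G Q + trp n H Q"
  by (simp add: trp_def algebra_simps sum.distrib)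
lemma trp_diffG: "trp n (\<lambda>k l. G k l - H k l) Q = trp n G Q - trp n H Q"
  by (simp add: trp_def algebra_simps sum_subtractf)

lemma zc_add: "u \<in> zc n SS \<Longrightarrow> w \<in> zc n SS \<Longrightarrow> (\<lambda>i. u i + w i) \<in> zc n SS"
  by (simp add: zc_def algebra_simps sum.distrib)

lemma col_zc: "\<forall>s\<in>SS. kills n G s \<Longrightarrow> i \<le> n \<Longrightarrow> (\<lambda>k. G k i) \<in> zc n SS"
  by (simp add: zc_def kills_def)

lemma trace_zero:
  assumes Qs: "symm n Q" and Qz: "\<forall>z\<in>zc n SS. bil n Q z z = 0"
  shows "symm n G \<Longrightarrow> (\<forall>s\<in>SS. kills n G s) \<Longrightarrow> trp n G Q = 0"
proof -
  have polar: "bil n Q u w = 0" if "u \<in> zc n SS" "w \<in> zc n SS" for u w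
  proof -
    have "0 = bil n Q (\<lambda>i. u i + w i) (\<lambda>i. u i + w i)" using Qz zc_add[OF that] by simp
    also have "\<dots> = bil n Q u u + bil n Q u w + bil n Q w u + bil n Q w w"
      by (simp add: bil_addL bil_addR)
    also have "\<dots> = 2 * bil n Q u w" using Qz that bil_swap[OF Qs, of w u] by simp
    finally show ?thesis by simp
  qed
  define R where "R G = {i\<in>{..n}. \<exists>j\<le>n. G i j \<noteq> 0}" for G :: "nat \<Rightarrow> nat \<Rightarrow> real"
  have main: "\<forall>G. card (R G) = N \<longrightarrow> symm n G \<longrightarrow> (\<forall>s\<in>SS. kills n G s) \<longrightarrow> trp n G Q = 0" for N
  proof (induction N rule: less_induct)
    case (less N)
    show ?case
    proof (intro allI impI)
      fix G assume cN: "card (R G) = N" and Gs: "symm n G" and Gk: "\<forall>s\<in>SS. kills n G s"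
      show "trp n G Q = 0"
      proof (cases "R G = {}")
        case True
        then have "\<forall>i\<le>n. \<forall>j\<le>n. G i j = 0" unfolding R_def by auto
        then show ?thesis unfolding trp_def by simp
      next
        case False
        then obtain i j where ij: "i \<le> n" "j \<le> n" "G i j \<noteq> 0" unfolding R_def by auto
        define g where "g = G i j"
        define u where "u k = G k i" for k
        define w where "w k = G k j" for k
        have uz: "u \<in> zc n SS" unfolding u_def using col_zc[OF Gk ij(1)] .
        have wz: "w \<in> zc n SS" unfolding w_def using col_zc[OF Gk ij(2)] .
        define G' where "G' k l = G k l - (1/g) * (u k * w l) - (1/g) * (w k * u l) + (G i i / g^2) * (w k * w l)" for k l
        have tr: "trp n G' Q = trp n G Q - (1/g) * bil n Q u w - (1/g) * bil n Q w u + (G i i / g^2) * bil n Q w w"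
          unfolding G'_def by (simp only: trp_addG trp_diffG trp_outer)
        then have tr': "trp n G' Q = trp n G Q" using polar uz wz by simp
        have s': "symm n G'" using Gs unfolding symm_def G'_def u_def w_def by (auto simp: mult_ac)
        have k': "\<forall>s\<in>SS. kills n G' s"
        proof
          fix s assume s: "s \<in> SS"
          have su: "(\<Sum>k\<le>n. s k * u k) = 0" and sw: "(\<Sum>k\<le>n. s k * w k) = 0"
            using uz wz s by (auto simp: zc_def)
          have "kills n (\<lambda>k l. G k l - (1/g) * (u k * w l) - (1/g) * (w k * u l) + (G i i / g^2) * (w k * w l)) s"
            using Gk s by (intro kills_addG kills_diffG kills_outer su sw) auto
          then show "kills n G' s" unfolding G'_def .
        qed
        have sub: "R G' \<subseteq> R G - {i}"
        proof
          fix k assume k: "k \<in> R G'"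
          then have kn: "k \<le> n" unfolding R_def by auto
          have "k \<noteq> i"
          proof
            assume "k = i"
            have "G' i l = 0" if "l \<le> n" for l
            proof -
              have "u i = G i i" "w i = g" by (simp_all add: u_def w_def g_def)
              then have "G' i l = G i l - u l" unfolding G'_def using ij(3)
                by (simp add: g_def field_simps power2_eq_square)
              also have "\<dots> = 0" using Gs ij(1) that unfolding u_def symm_def by auto
              finally show ?thesis .
            qed
            then show False using k \<open>k = i\<close> unfolding R_def by auto
          qed
          moreover have "k \<in> R G"
          proof (rule ccontr)
            assume "k \<notin> R G"
            then have "\<forall>l\<le>n. G k l = 0" using kn unfolding R_def by auto
            then have "u k = 0" "w k = 0" using ij unfolding u_def w_def by auto
            then have "\<forall>l\<le>n. G' k l = 0" using \<open>\<forall>l\<le>n. G k l = 0\<close> unfolding G'_def by auto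
            then show False using k unfolding R_def by auto
          qed
          ultimately show "k \<in> R G - {i}" by simp
        qed
        have "i \<in> R G" using ij unfolding R_def by auto
        then have ps: "R G' \<subset> R G" using sub by blast
        have "finite (R G)" unfolding R_def by simp
        then have "card (R G') < card (R G)" using ps by (rule psubset_card_mono)
        then have "trp n G' Q = 0" using less.IH cN s' k' by blast
        then show ?thesis using tr' by simp
      qed
    qed
  qed
  then show "symm n G \<Longrightarrow> (\<forall>s\<in>SS. kills n G s) \<Longrightarrow> trp n G Q = 0" by blast
qed



definition M2n :: "nat \<Rightarrow> monom set" where "M2n n = {m. ks m \<subseteq> {..n} \<and> mdeg m = 2}"

lemma M2n_sub: "M2n n \<subseteq> (\<lambda>(i,j). mon i j) ` ({..n} \<times> {..n})"
proof
  fix m assume "m \<in> M2n n"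
  then obtain i j where "i \<le> n" "j \<le> n" "m = mon i j" using deg2_char unfolding M2n_def by blast
  then show "m \<in> (\<lambda>(i,j). mon i j) ` ({..n} \<times> {..n})" by (intro rev_image_eqI[of "(i,j)"]) auto
qed

lemma finite_M2n: "finite (M2n n)"
  using M2n_sub finite_subset by blast

lemma homog2_keys: "q \<in> homog n 2 \<Longrightarrow> ks q \<subseteq> M2n n"
  by (auto simp: homog_def M2n_def)

lemma mon_M2n: "i \<le> n \<Longrightarrow> j \<le> n \<Longrightarrow> mon i j \<in> M2n n"
  by (auto simp: M2n_def keys_mon mdeg_mon)

lemma pairing_trp: "q \<in> homog n 2 \<Longrightarrow> pairing L q = trp n (gm L) (qm q)"
  by (simp add: pairing_hom2 trp_def mult.commute)

lemma pairing_sq: "f \<in> homog n 1 \<Longrightarrow> pairing L (f * f) = bil n (gm L) (cf f) (cf f)"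
  by (simp add: pairing_prod bil_def mult_ac)

lemma cf_var: "cf (var j) k = (if j = k then 1 else 0)"
  by (simp add: cf_def var_def lookup_single when_def single_nat_inj)

lemma cf_add: "cf (f + g) k = cf f k + cf g k" by (simp add: cf_def lookup_add)
lemma cf_scaleR: "cf (c *\<^sub>R f) k = c * cf f k" by (simp add: cf_def lookup_scaleR)
lemma cf_sum: "cf (sum f A) k = (\<Sum>x\<in>A. cf (f x) k)" by (simp add: cf_def lookup_sum)

lemma cf_lin: "k \<le> n \<Longrightarrow> cf (\<Sum>i\<le>n. c i *\<^sub>R var i) k = c k"
  by (simp add: cf_sum cf_scaleR cf_var if_distrib[where f="\<lambda>x. _ * x"] cong: if_cong)

lemma lin_homog: "(\<Sum>i\<le>n. c i *\<^sub>R var i) \<in> homog n 1"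
  by (rule homog_sum, rule homog_scaleR, rule var_homog, simp)

lemma bil_cong: "(\<forall>i\<le>n. c i = c' i) \<Longrightarrow> (\<forall>i\<le>n. d i = d' i) \<Longrightarrow> bil n G c d = bil n G c' d'"
  by (simp add: bil_def)

lemma psd_cong: "(\<forall>i\<le>n. \<forall>j\<le>n. G i j = H i j) \<Longrightarrow> psd n G \<longleftrightarrow> psd n H"
  by (simp add: psd_def bil_def)
lemma trp_cong: "(\<forall>i\<le>n. \<forall>j\<le>n. G i j = H i j) \<Longrightarrow> trp n G Q = trp n H Q"
  by (simp add: trp_def)
lemma kills_cong: "(\<forall>i\<le>n. \<forall>j\<le>n. G i j = H i j) \<Longrightarrow> kills n G s \<longleftrightarrow> kills n H s"
  by (simp add: kills_def)

lemma sum_list_sq: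
  assumes "set fs \<subseteq> homog n 1"
  shows "(\<Sum>f\<leftarrow>fs. f * f) \<in> homog n 2 \<and> (psd n (gm L) \<longrightarrow> pairing L (\<Sum>f\<leftarrow>fs. f * f) \<ge> 0)"
  using assms
proof (induction fs)
  case Nil then show ?case by (simp add: homog_zero pairing_def)
next
  case (Cons f fs)
  then have f: "f \<in> homog n 1" by simp
  have "pairing L (f * f + (\<Sum>f\<leftarrow>fs. f * f)) = pairing L (f * f) + pairing L (\<Sum>f\<leftarrow>fs. f * f)"
    using linear_pairing[of L] by (simp add: linear_add)
  moreover have "psd n (gm L) \<Longrightarrow> pairing L (f * f) \<ge> 0" using f by (simp add: pairing_sq psd_def)
  ultimately show ?case using Cons f by (auto intro!: homog_add prod_homog)
qed

lemma gm_add: "gm (L1 + L2) i j = gm L1 i j + gm L2 i j" by (simp add: gm_def lookup_add)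
lemma gm_diff: "gm (L1 - L2) i j = gm L1 i j - gm L2 i j" by (simp add: gm_def lookup_minus)
lemma gm_scaleR: "gm (c *\<^sub>R L) i j = c * gm L i j" by (simp add: gm_def lookup_scaleR)

lemma hankel_iff:
  assumes "0 \<in> I"
  shows "L \<in> hankel n I \<longleftrightarrow> ks L \<subseteq> M2n n \<and> psd n (gm L) \<and> (\<forall>q\<in>I \<inter> homog n 2. pairing L q = 0)"
proof
  assume L: "L \<in> hankel n I"
  then have k: "ks L \<subseteq> M2n n" and perp: "\<forall>q\<in>I \<inter> homog n 2. pairing L q = 0"
    by (auto simp: hankel_def quad_dual_def M2n_def)
  have "0 \<le> bil n (gm L) c c" for c
  proof -
    define f where "f = (\<Sum>i\<le>n. c i *\<^sub>R var i)"
    have f: "f \<in> homog n 1" unfolding f_def by (rule lin_homog)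
    have "f * f \<in> sos_cone n I"
      unfolding sos_cone_def using f assms by (auto intro!: exI[of _ "[f]"] prod_homog)
    then have "0 \<le> pairing L (f * f)" using L by (auto simp: hankel_def)
    also have "pairing L (f * f) = bil n (gm L) (cf f) (cf f)" by (rule pairing_sq[OF f])
    also have "\<dots> = bil n (gm L) c c" by (rule bil_cong) (auto simp: f_def cf_lin)
    finally show ?thesis .
  qed
  then show "ks L \<subseteq> M2n n \<and> psd n (gm L) \<and> (\<forall>q\<in>I \<inter> homog n 2. pairing L q = 0)"
    using k perp by (auto simp: psd_def)
next
  assume h: "ks L \<subseteq> M2n n \<and> psd n (gm L) \<and> (\<forall>q\<in>I \<inter> homog n 2. pairing L q = 0)"
  have "pairing L q \<ge> 0" if q: "q \<in> sos_cone n I" for q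
  proof -
    obtain fs where fs: "set fs \<subseteq> homog n 1" "q - (\<Sum>f\<leftarrow>fs. f * f) \<in> I" and qh: "q \<in> homog n 2"
      using q by (auto simp: sos_cone_def)
    have S: "(\<Sum>f\<leftarrow>fs. f * f) \<in> homog n 2" "pairing L (\<Sum>f\<leftarrow>fs. f * f) \<ge> 0"
      using sum_list_sq[OF fs(1), of L] h by auto
    have "q - (\<Sum>f\<leftarrow>fs. f * f) \<in> I \<inter> homog n 2" using fs(2) homog_diff[OF qh S(1)] by simp
    then have "pairing L (q - (\<Sum>f\<leftarrow>fs. f * f)) = 0" using h by blast
    moreover have "pairing L q = pairing L (q - (\<Sum>f\<leftarrow>fs. f * f)) + pairing L (\<Sum>f\<leftarrow>fs. f * f)"
      using linear_pairing[of L] by (simp add: linear_diff)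
    ultimately show ?thesis using S by simp
  qed
  then show "L \<in> hankel n I" using h by (auto simp: hankel_def quad_dual_def M2n_def)
qed

lemma hankel_cone:
  assumes "0 \<in> I" "L1 \<in> hankel n I" "L2 \<in> hankel n I" "a \<ge> 0" "b \<ge> 0"
  shows "a *\<^sub>R L1 + b *\<^sub>R L2 \<in> hankel n I"
proof -
  have h1: "ks L1 \<subseteq> M2n n" "psd n (gm L1)" "\<forall>q\<in>I \<inter> homog n 2. pairing L1 q = 0"
    and h2: "ks L2 \<subseteq> M2n n" "psd n (gm L2)" "\<forall>q\<in>I \<inter> homog n 2. pairing L2 q = 0"
    using assms hankel_iff by blast+
  have "ks (a *\<^sub>R L1 + b *\<^sub>R L2) \<subseteq> M2n n"
    using keys_add[of "a *\<^sub>R L1" "b *\<^sub>R L2"] keys_scaleR[of a L1] keys_scaleR[of b L2] h1 h2 by blast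
  moreover have "psd n (gm (a *\<^sub>R L1 + b *\<^sub>R L2))"
  proof -
    have "bil n (gm (a *\<^sub>R L1 + b *\<^sub>R L2)) c c = a * bil n (gm L1) c c + b * bil n (gm L2) c c" for c
      by (simp add: gm_add gm_scaleR bil_def algebra_simps sum.distrib sum_distrib_left)
    then show ?thesis using h1 h2 assms by (simp add: psd_def)
  qed
  moreover have "\<forall>q\<in>I \<inter> homog n 2. pairing (a *\<^sub>R L1 + b *\<^sub>R L2) q = 0"
    using h1 h2 by (simp add: pairing_add_left pairing_scaleR_left)
  ultimately show ?thesis using hankel_iff[OF assms(1)] by blast
qed

lemma ideal_mult: "is_ideal n I \<Longrightarrow> a \<in> I \<Longrightarrow> g \<in> Rn n \<Longrightarrow> g * a \<in> I"
  by (simp add: is_ideal_def)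

lemma ideal_scale: "is_ideal n I \<Longrightarrow> a \<in> I \<Longrightarrow> c *\<^sub>R a \<in> I"
  unfolding scaleR_single0 by (rule ideal_mult) (auto simp: Rn_def)

lemma subspace_ideal_homog: "is_ideal n I \<Longrightarrow> subspace (I \<inter> homog n d)"
  unfolding subspace_def using ideal_scale homog_scaleR homog_add homog_zero
  by (auto simp: is_ideal_def)

lemma kills_from_perp:
  assumes "is_ideal n I" "\<forall>q\<in>I \<inter> homog n 2. pairing M q = 0" "a \<in> I \<inter> homog n 1"
  shows "kills n (gm M) (cf a)"
  unfolding kills_def
proof (intro allI impI)
  fix j assume j: "j \<le> n"
  have "var j * a \<in> I" using assms(1,3) ideal_mult var_homog[OF j] homog_Rn by blast
  moreover have "a * var j \<in> homog n 2" using assms(3) prod_homog var_homog[OF j] by blast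
  ultimately have "pairing M (a * var j) = 0" using assms(2) by (simp add: mult.commute)
  moreover have "pairing M (a * var j) = (\<Sum>i\<le>n. \<Sum>k\<le>n. cf a i * cf (var j) k * gm M i k)"
    using assms(3) var_homog[OF j] by (intro pairing_prod) auto
  moreover have "(\<Sum>k\<le>n. cf a i * cf (var j) k * gm M i k) = cf a i * gm M i j" for i
  proof -
    have "(\<Sum>k\<le>n. cf a i * cf (var j) k * gm M i k) = (\<Sum>k\<le>n. if j = k then cf a i * gm M i k else 0)"
      by (intro sum.cong refl) (simp add: cf_var)
    also have "\<dots> = cf a i * gm M i j" using j by (simp add: sum.delta)
    finally show ?thesis .
  qed
  ultimately show "(\<Sum>i\<le>n. cf a i * gm M i j) = 0" by simp
qed

definition Lof :: "nat \<Rightarrow> (nat \<Rightarrow> nat \<Rightarrow> real) \<Rightarrow> rpoly" where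
  "Lof n G = (\<Sum>i\<le>n. \<Sum>j\<le>n. sg (mon i j) ((if i = j then 1 else 1/2) * G i j))"

lemma lookup_Lof: "lk (Lof n G) m = (\<Sum>i\<le>n. \<Sum>j\<le>n. if mon i j = m then (if i = j then 1 else 1/2) * G i j else 0)"
  by (simp add: Lof_def lookup_sum lookup_single when_def)

lemma keys_Lof: "ks (Lof n G) \<subseteq> M2n n"
proof
  fix m assume m: "m \<in> ks (Lof n G)"
  show "m \<in> M2n n"
  proof (rule ccontr)
    assume "m \<notin> M2n n"
    then have "\<forall>i\<le>n. \<forall>j\<le>n. mon i j \<noteq> m" using mon_M2n by blast
    then have "lk (Lof n G) m = 0" by (simp add: lookup_Lof)
    then show False using m by (simp add: in_keys_iff)
  qed
qed

lemma gm_Lof: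
  assumes "symm n G" "a \<le> n" "b \<le> n"
  shows "gm (Lof n G) a b = G a b"
proof -
  have "gm (Lof n G) a b = (\<Sum>i\<le>n. \<Sum>j\<le>n. if (i = a \<and> j = b) \<or> (i = b \<and> j = a) then (if i = j then 1 else 1/2) * G i j else 0)"
    by (simp add: gm_def lookup_Lof mon_eq_iff)
  also have "\<dots> = (if a = b then G a a else (1/2) * G a b + (1/2) * G b a)"
    using assms by (subst sum_pairs_sym) auto
  also have "\<dots> = G a b" using assms by (auto simp: symm_def)
  finally show ?thesis .
qed



lemma subspace_linear_kernel: "linear h \<Longrightarrow> subspace {x. h x = 0}"
  unfolding subspace_def by (auto simp: linear_add linear_0 linear_cmul)

lemma duality:
  assumes S: "subspace S" and T: "subspace T" and Th: "T \<subseteq> homog n 2" and Sh: "S \<subseteq> homog n 2"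
    and perp: "\<forall>q\<in>S \<inter> T. pairing L q = 0"
  shows "\<exists>M. ks M \<subseteq> M2n n \<and> (\<forall>q\<in>S. pairing (L - M) q = 0) \<and> (\<forall>q\<in>T. pairing M q = 0)"
proof -
  obtain Bt where Bt: "Bt \<subseteq> T" "independent Bt" "T \<subseteq> span Bt" by (rule basis_exists[of T])
  obtain B where B: "Bt \<subseteq> B" "B \<subseteq> T \<union> S" "independent B" "T \<union> S \<subseteq> span B"
    by (rule maximal_independent_subset_extend[of Bt "T \<union> S"]) (use Bt in auto)
  define f where "f b = (if b \<in> Bt then 0 else pairing L b)" for b
  obtain g where g: "linear g" "\<forall>x\<in>B. g x = f x" using linear_independent_extend[OF B(3), of f] by auto
  have gT: "g x = 0" if "x \<in> span Bt" for x
    using that by (rule span_induct) (use subspace_linear_kernel[OF g(1)] g(2) B(1) f_def in auto)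
  have BS: "B - Bt \<subseteq> S"
  proof
    fix b assume b: "b \<in> B - Bt"
    show "b \<in> S"
    proof (rule ccontr)
      assume "b \<notin> S"
      then have "b \<in> span Bt" using b B(2) Bt(3) by blast
      moreover have "span Bt \<subseteq> span (B - {b})" using b B(1) by (intro span_mono) blast
      ultimately have "dependent B" using b unfolding dependent_def by blast
      then show False using B(3) by simp
    qed
  qed
  have lin_h: "linear (\<lambda>p. g p - pairing L p)" using g(1) linear_pairing by (rule linear_compose_sub)
  have gS: "g s = pairing L s" if s: "s \<in> S" for s
  proof -
    have e: "Bt \<union> (B - Bt) = B" using B(1) by blast
    have "s \<in> span B" using s B(4) by blast
    then have "s \<in> {x + y |x y. x \<in> span Bt \<and> y \<in> span (B - Bt)}"
      using span_Un[of Bt "B - Bt"] unfolding e by simp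
    then obtain x y where xy: "s = x + y" "x \<in> span Bt" "y \<in> span (B - Bt)" by blast
    have yS: "y \<in> S" using span_minimal[OF BS S] xy(3) by blast
    have xS: "x \<in> S" using subspace_diff[OF S s yS] xy(1) by simp
    have xT: "x \<in> T" using span_minimal[OF Bt(1) T] xy(2) by blast
    have gx: "g x = 0" using gT xy(2) by blast
    have px: "pairing L x = 0" using perp xS xT by blast
    have "g y - pairing L y = 0"
      using xy(3) by (rule span_induct) (use subspace_linear_kernel[OF lin_h] g(2) f_def in auto)
    then show ?thesis using xy(1) gx px linear_add[OF g(1)] linear_add[OF linear_pairing] by simp
  qed
  define M where "M = (\<Sum>m\<in>M2n n. sg m (g (sg m 1)))"
  have lM: "lk M m = (if m \<in> M2n n then g (sg m 1) else 0)" for m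
    by (simp add: M_def lookup_sum lookup_single when_def finite_M2n)
  have kM: "ks M \<subseteq> M2n n" by (auto simp: in_keys_iff lM split: if_splits)
  have pM: "pairing M q = g q" if q: "q \<in> homog n 2" for q
  proof -
    have kq: "ks q \<subseteq> M2n n" using homog2_keys[OF q] .
    have "pairing M q = (\<Sum>m\<in>ks q. lk q m * g (sg m 1))"
      unfolding pairing_def using kq by (intro sum.cong refl) (auto simp: lM)
    also have "\<dots> = g (\<Sum>m\<in>ks q. lk q m *\<^sub>R sg m 1)"
      by (simp add: linear_sum[OF g(1)] linear_cmul[OF g(1)])
    also have "(\<Sum>m\<in>ks q. lk q m *\<^sub>R sg m 1) = q"
      by (simp add: single_scaleR poly_decomp[symmetric])
    finally show ?thesis .
  qed
  show ?thesis
  proof (intro exI conjI ballI)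
    show "ks M \<subseteq> M2n n" by (rule kM)
  next
    fix q assume "q \<in> S"
    then show "pairing (L - M) q = 0" using pM Sh gS by (auto simp: pairing_diff_left)
  next
    fix q assume q: "q \<in> T"
    then have "q \<in> span Bt" using Bt(3) by blast
    then show "pairing M q = 0" using pM Th gT q by auto
  qed
qed



definition Vz :: "nat \<Rightarrow> (nat \<Rightarrow> real) \<Rightarrow> rpoly set" where "Vz n z = {p\<in>Rn n. evalp p z = 0}"

lemma Rn_add: "a \<in> Rn n \<Longrightarrow> b \<in> Rn n \<Longrightarrow> a + b \<in> Rn n"
  unfolding Rn_def using keys_add[of a b] by blast

lemma Rn_mult: "a \<in> Rn n \<Longrightarrow> b \<in> Rn n \<Longrightarrow> a * b \<in> Rn n"
  unfolding Rn_def using keys_mult[of a b] by (force simp: keys_add_nat)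

lemma is_ideal_Vz: "is_ideal n (Vz n z)"
  unfolding is_ideal_def Vz_def
  by (auto simp: evalp_zero evalp_add evalp_mult Rn_add Rn_mult) (auto simp: Rn_def)

lemma gen_vanish: "S \<subseteq> Vz n z \<Longrightarrow> ideal_gen n S \<subseteq> Vz n z"
  unfolding ideal_gen_def using is_ideal_Vz by blast

lemma sat_vanish:
  assumes "i0 \<le> n" "z i0 \<noteq> 0" "\<forall>p\<in>K. evalp p z = 0" "f \<in> sat n K"
  shows "evalp f z = 0"
proof -
  obtain k where k: "\<forall>g\<in>homog n k. g * f \<in> K" using assms(4) by (auto simp: sat_def)
  have "sg (sg i0 k) 1 \<in> homog n k"
    using assms(1) by (intro homog_single) (auto simp: mdeg_single)
  then have "evalp (sg (sg i0 k) 1 * f) z = 0" using k assms(3) by blast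
  then have "z i0 ^ k * evalp f z = 0" by (simp add: evalp_mult evalp_single mev_single)
  then show ?thesis using assms(2) by simp
qed

lemma sum_vanish:
  "\<forall>p\<in>I. evalp p z = 0 \<Longrightarrow> \<forall>p\<in>J. evalp p z = 0 \<Longrightarrow> \<forall>p\<in>ideal_sum I J. evalp p z = 0"
  by (auto simp: ideal_sum_def evalp_add)

lemma sat_contains:
  assumes "is_ideal n I" "is_ideal n J"
  shows "ideal_sum I J \<subseteq> sat n (ideal_sum I J)"
proof
  fix f assume f: "f \<in> ideal_sum I J"
  then obtain a b where ab: "f = a + b" "a \<in> I" "b \<in> J" by (auto simp: ideal_sum_def)
  have "a \<in> Rn n" "b \<in> Rn n" using ab assms by (auto simp: is_ideal_def)
  then have "f \<in> Rn n" using ab Rn_add by simp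
  moreover have "\<forall>g\<in>homog n 0. g * f \<in> ideal_sum I J"
  proof
    fix g assume "g \<in> homog n 0"
    then have g: "g \<in> Rn n" using homog_Rn by blast
    have "g * f = g * a + g * b" using ab by (simp add: distrib_left)
    then show "g * f \<in> ideal_sum I J" using ab g assms unfolding ideal_sum_def is_ideal_def by blast
  qed
  ultimately show "f \<in> sat n (ideal_sum I J)" unfolding sat_def by blast
qed

lemma hyp_vanish:
  assumes X: "closed_subscheme n IX" and Y: "closed_subscheme n IY"
    and H: "inter_ideal n IX IY = inter_ideal n (span_ideal n IX) (span_ideal n IY)"
    and q: "q \<in> (IX \<union> IY) \<inter> homog n 2"
    and z: "z \<in> zc n (cf ` ((IX \<union> IY) \<inter> homog n 1))"
  shows "bil n (qm q) z z = 0"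
proof -
  have iX: "is_ideal n IX" and iY: "is_ideal n IY"
    using X Y by (auto simp: closed_subscheme_def hom_ideal_def)
  have qh: "q \<in> homog n 2" using q by blast
  have "bil n (qm q) z z = evalp q z" by (simp add: evalp_hom2[OF qh] bil_def mult_ac)
  also have "evalp q z = 0"
  proof (cases "\<exists>i0\<le>n. z i0 \<noteq> 0")
    case True
    then obtain i0 where i0: "i0 \<le> n" "z i0 \<noteq> 0" by blast
    have lin: "evalp a z = 0" if "a \<in> (IX \<union> IY) \<inter> homog n 1" for a
      using z that by (auto simp: zc_def evalp_hom1)
    have spanv: "\<forall>p\<in>span_ideal n I. evalp p z = 0" if "is_ideal n I" "I \<subseteq> IX \<union> IY" for I
    proof
      fix p assume p: "p \<in> span_ideal n I"
      have "I \<inter> homog n 1 \<subseteq> Vz n z" using that lin by (auto simp: Vz_def is_ideal_def)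
      then have "ideal_gen n (I \<inter> homog n 1) \<subseteq> Vz n z" by (rule gen_vanish)
      then have "\<forall>p\<in>ideal_gen n (I \<inter> homog n 1). evalp p z = 0" by (auto simp: Vz_def)
      then show "evalp p z = 0" using sat_vanish[of i0 n z, OF i0] p unfolding span_ideal_def by blast
    qed
    have "\<forall>p\<in>inter_ideal n (span_ideal n IX) (span_ideal n IY). evalp p z = 0"
      unfolding inter_ideal_def using sat_vanish[of i0 n z, OF i0] sum_vanish spanv[OF iX] spanv[OF iY] by blast
    moreover have "q \<in> inter_ideal n IX IY"
    proof -
      have "0 \<in> IX" "0 \<in> IY" using iX iY by (auto simp: is_ideal_def)
      then have "q \<in> ideal_sum IX IY" using q unfolding ideal_sum_def by (auto intro: exI[of _ 0] exI[of _ q])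
      then show ?thesis unfolding inter_ideal_def using sat_contains[OF iX iY] by blast
    qed
    ultimately show ?thesis using H by simp
  next
    case False
    then show ?thesis by (simp add: evalp_hom2[OF qh])
  qed
  finally show ?thesis .
qed



lemma kills_cf_add: "kills n G s \<Longrightarrow> kills n G t \<Longrightarrow> kills n G (\<lambda>i. s i + t i)"
  by (simp add: kills_def algebra_simps sum.distrib)
lemma kills_cf_scale: "kills n G s \<Longrightarrow> kills n G (\<lambda>i. c * s i)"
  by (simp add: kills_def mult.assoc sum_distrib_left[symmetric])

lemma fin_span_list:
  assumes "is_ideal n I"
  shows "\<exists>bs. set bs \<subseteq> cf ` (I \<inter> homog n 1) \<and>
     (\<forall>G. (\<forall>b\<in>set bs. kills n G b) \<longrightarrow> (\<forall>b\<in>cf ` (I \<inter> homog n 1). kills n G b))"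
proof -
  let ?V = "I \<inter> homog n 1"
  obtain B where B: "B \<subseteq> ?V" "independent B" "?V \<subseteq> span B" by (rule basis_exists[of ?V])
  have "?V \<subseteq> span (var ` {..n})"
  proof
    fix f assume "f \<in> ?V"
    then have "f = (\<Sum>i\<le>n. cf f i *\<^sub>R var i)" using hom1_expand by blast
    also have "\<dots> \<in> span (var ` {..n})"
      by (intro span_sum span_scale span_base) auto
    finally show "f \<in> span (var ` {..n})" .
  qed
  then have "finite B" using independent_span_bound[of "var ` {..n}" B] B by auto
  then obtain xs where xs: "set xs = B" using finite_list by blast
  show ?thesis
  proof (intro exI conjI allI impI)
    show "set (map cf xs) \<subseteq> cf ` ?V" using xs B(1) by auto
  next
    fix G assume h: "\<forall>b\<in>set (map cf xs). kills n G b"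
    have sub: "subspace {f. kills n G (cf f)}"
      unfolding subspace_def
    proof (intro conjI ballI allI)
      show "0 \<in> {f. kills n G (cf f)}" by (simp add: kills_def cf_def)
    next
      fix x y assume "x \<in> {f. kills n G (cf f)}" "y \<in> {f. kills n G (cf f)}"
      then have "kills n G (\<lambda>i. cf x i + cf y i)" by (simp add: kills_cf_add)
      moreover have "cf (x + y) = (\<lambda>i. cf x i + cf y i)" by (simp add: fun_eq_iff cf_add)
      ultimately show "x + y \<in> {f. kills n G (cf f)}" by simp
    next
      fix c x assume "x \<in> {f. kills n G (cf f)}"
      then have "kills n G (\<lambda>i. c * cf x i)" by (simp add: kills_cf_scale)
      moreover have "cf (c *\<^sub>R x) = (\<lambda>i. c * cf x i)" by (simp add: fun_eq_iff cf_scaleR)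
      ultimately show "c *\<^sub>R x \<in> {f. kills n G (cf f)}" by simp
    qed
    show "\<forall>b\<in>cf ` ?V. kills n G b"
    proof
      fix b assume "b \<in> cf ` ?V"
      then obtain f where f: "f \<in> ?V" "b = cf f" by blast
      have "f \<in> span B" using f B(3) by blast
      then have "kills n G (cf f)" by (rule span_induct) (use sub h xs in auto)
      then show "kills n G b" using f by simp
    qed
  qed
qed

lemma key:
  assumes X: "closed_subscheme n IX" and Y: "closed_subscheme n IY"
    and H: "inter_ideal n IX IY = inter_ideal n (span_ideal n IX) (span_ideal n IY)"
    and G: "symm n G" "\<forall>s\<in>cf ` ((IX \<union> IY) \<inter> homog n 1). kills n G s"
    and q: "q \<in> (IX \<union> IY) \<inter> homog n 2"
  shows "trp n G (qm q) = 0"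
proof (rule trace_zero[OF _ _ G])
  show "symm n (qm q)" by (simp add: symm_def qm_sym)
  show "\<forall>z\<in>zc n (cf ` ((IX \<union> IY) \<inter> homog n 1)). bil n (qm q) z z = 0"
    using hyp_vanish[OF X Y H q] by blast
qed

lemma hyp_sym:
  "inter_ideal n IX IY = inter_ideal n (span_ideal n IX) (span_ideal n IY) \<Longrightarrow>
   inter_ideal n IY IX = inter_ideal n (span_ideal n IY) (span_ideal n IX)"
proof -
  have c: "ideal_sum A B = ideal_sum B A" for A B :: "rpoly set"
    unfolding ideal_sum_def by (auto; metis add.commute)
  show "inter_ideal n IX IY = inter_ideal n (span_ideal n IX) (span_ideal n IY) \<Longrightarrow> ?thesis"
    unfolding inter_ideal_def by (simp add: c)
qed

lemma gm_comb: "gm (t *\<^sub>R a + s *\<^sub>R c) i j = t * gm a i j + s * gm c i j"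
  by (simp add: gm_add gm_scaleR)

lemma face_aux:
  assumes X: "closed_subscheme n IX" and Y: "closed_subscheme n IY"
    and H: "inter_ideal n IX IY = inter_ideal n (span_ideal n IX) (span_ideal n IY)"
    and a: "a \<in> hankel n (IX \<inter> IY)" and c: "c \<in> hankel n (IX \<inter> IY)"
    and t: "t > 0" and s: "s \<ge> 0" and x: "t *\<^sub>R a + s *\<^sub>R c \<in> hankel n IX"
  shows "a \<in> hankel n IX"
proof -
  have iX: "is_ideal n IX" and iY: "is_ideal n IY"
    using X Y by (auto simp: closed_subscheme_def hom_ideal_def)
  have z: "0 \<in> IX" "0 \<in> IY" "0 \<in> IX \<inter> IY" using iX iY by (auto simp: is_ideal_def)
  have ha: "ks a \<subseteq> M2n n" "psd n (gm a)" "\<forall>q\<in>(IX \<inter> IY) \<inter> homog n 2. pairing a q = 0"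
    using a hankel_iff[OF z(3)] by blast+
  have hc: "psd n (gm c)" using c hankel_iff[OF z(3)] by blast
  let ?x = "t *\<^sub>R a + s *\<^sub>R c"
  have hx: "\<forall>q\<in>IX \<inter> homog n 2. pairing ?x q = 0" using x hankel_iff[OF z(1)] by blast
  have killa: "kills n (gm a) v" if v: "v \<in> cf ` (IX \<inter> homog n 1)" for v
  proof -
    obtain f where f: "f \<in> IX \<inter> homog n 1" "v = cf f" using v by blast
    have "kills n (gm ?x) v" using kills_from_perp[OF iX hx f(1)] f(2) by simp
    then have "bil n (gm ?x) v v = 0" using kills_iff_bil by blast
    moreover have "bil n (gm ?x) v v = t * bil n (gm a) v v + s * bil n (gm c) v v"
      by (simp add: gm_comb bil_def algebra_simps sum.distrib sum_distrib_left)
    moreover have "bil n (gm a) v v \<ge> 0" "bil n (gm c) v v \<ge> 0" using ha(2) hc psd_def by blast+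
    ultimately have "bil n (gm a) v v = 0" using t s
      by (smt (verit, best) mult_nonneg_nonneg mult_pos_pos)
    then show ?thesis using psd_kills[OF ha(2)] by (simp add: symm_def gm_sym)
  qed
  have S: "subspace (IX \<inter> homog n 2)" "subspace (IY \<inter> homog n 2)"
    using subspace_ideal_homog iX iY by blast+
  obtain M where M: "ks M \<subseteq> M2n n" "\<forall>q\<in>IX \<inter> homog n 2. pairing (a - M) q = 0"
      "\<forall>q\<in>IY \<inter> homog n 2. pairing M q = 0"
    using duality[where S="IX \<inter> homog n 2" and T="IY \<inter> homog n 2" and L=a and n=n] S ha(3) by auto
  have kMB: "kills n (gm M) v" if "v \<in> cf ` (IY \<inter> homog n 1)" for v
    using kills_from_perp[OF iY M(3)] that by blast
  have kMA: "kills n (gm M) v" if v: "v \<in> cf ` (IX \<inter> homog n 1)" for v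
  proof -
    have k1: "kills n (gm (a - M)) v" using kills_from_perp[OF iX M(2)] v by blast
    have "kills n (\<lambda>i j. gm a i j - gm (a - M) i j) v" by (rule kills_diffG[OF killa[OF v] k1])
    moreover have "(\<lambda>i j. gm a i j - gm (a - M) i j) = gm M" by (simp add: fun_eq_iff gm_diff)
    ultimately show ?thesis by simp
  qed
  have "pairing a q = 0" if q: "q \<in> IX \<inter> homog n 2" for q
  proof -
    have "trp n (gm M) (qm q) = 0"
      by (rule key[OF X Y H]) (use kMA kMB q in \<open>auto simp: symm_def gm_sym\<close>)
    then have "pairing M q = 0" using q pairing_trp[of q n M] by simp
    moreover have "pairing (a - M) q = 0" using M(2) q by blast
    ultimately show ?thesis by (simp add: pairing_diff_left)
  qed
  then show ?thesis using hankel_iff[OF z(1)] ha by blast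
qed



lemma hankel_mono:
  assumes "0 \<in> J" "J \<subseteq> I" "0 \<in> I"
  shows "hankel n I \<subseteq> hankel n J"
  using hankel_iff[OF assms(1)] hankel_iff[OF assms(3)] assms(2) by blast

lemma convex_hankel: "0 \<in> I \<Longrightarrow> convex (hankel n I)"
  unfolding convex_def using hankel_cone by blast

lemma hull_part:
  assumes X: "closed_subscheme n IX" and Y: "closed_subscheme n IY"
    and H: "inter_ideal n IX IY = inter_ideal n (span_ideal n IX) (span_ideal n IY)"
  shows "hankel n (IX \<inter> IY) \<subseteq> convex hull (hankel n IX \<union> hankel n IY)"
proof
  fix L assume L: "L \<in> hankel n (IX \<inter> IY)"
  have iX: "is_ideal n IX" and iY: "is_ideal n IY"
    using X Y by (auto simp: closed_subscheme_def hom_ideal_def)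
  have z: "0 \<in> IX" "0 \<in> IY" "0 \<in> IX \<inter> IY" using iX iY by (auto simp: is_ideal_def)
  have hL: "ks L \<subseteq> M2n n" "psd n (gm L)" "\<forall>q\<in>(IX \<inter> IY) \<inter> homog n 2. pairing L q = 0"
    using L hankel_iff[OF z(3)] by blast+
  have S: "subspace (IX \<inter> homog n 2)" "subspace (IY \<inter> homog n 2)"
    using subspace_ideal_homog iX iY by blast+
  obtain M where M: "ks M \<subseteq> M2n n" "\<forall>q\<in>IX \<inter> homog n 2. pairing (L - M) q = 0"
      "\<forall>q\<in>IY \<inter> homog n 2. pairing M q = 0"
    using duality[where S="IX \<inter> homog n 2" and T="IY \<inter> homog n 2" and L=L and n=n] S hL(3) by auto
  let ?SA = "cf ` (IX \<inter> homog n 1)" and ?SB = "cf ` (IY \<inter> homog n 1)"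
  have kMB: "kills n (gm M) v" if "v \<in> ?SB" for v
    using kills_from_perp[OF iY M(3)] that by blast
  have gLM: "gm (L - M) = (\<lambda>i j. gm L i j - gm M i j)" by (simp add: fun_eq_iff gm_diff)
  have kLMA: "kills n (\<lambda>i j. gm L i j - gm M i j) v" if "v \<in> ?SA" for v
    using kills_from_perp[OF iX M(2)] that gLM by auto
  obtain bs where bs: "set bs \<subseteq> ?SB" "\<forall>G. (\<forall>b\<in>set bs. kills n G b) \<longrightarrow> (\<forall>b\<in>?SB. kills n G b)"
    using fin_span_list[OF iY] by blast
  have symM: "symm n (gm M)" and symL: "symm n (gm L)" by (auto simp: symm_def gm_sym)
  have "\<exists>P. symm n P \<and> psd n P \<and> (\<forall>b\<in>set bs \<union> {}. kills n P b) \<and> psd n (\<lambda>i j. gm L i j - P i j)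
      \<and> (\<forall>a\<in>?SA. kills n (\<lambda>i j. gm L i j - P i j) a)"
  proof (rule elim[OF symM symL hL(2)])
    show "\<forall>a\<in>?SA. kills n (\<lambda>i j. gm L i j - gm M i j) a" using kLMA by blast
    show "\<forall>b\<in>set bs. kills n (gm M) b" using kMB bs(1) by blast
    show "\<forall>k\<in>{}. kills n (gm L) k" by simp
  qed
  then obtain P where P: "symm n P" "psd n P" "\<forall>b\<in>set bs \<union> {}. kills n P b" "psd n (\<lambda>i j. gm L i j - P i j)"
      "\<forall>a\<in>?SA. kills n (\<lambda>i j. gm L i j - P i j) a"
    by (elim exE conjE) (intro that)
  have kPB: "kills n P v" if "v \<in> ?SB" for v using bs(2) P(3) that by auto
  have union: "cf ` ((IX \<union> IY) \<inter> homog n 1) = ?SA \<union> ?SB" by blast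
  have symPM: "symm n (\<lambda>i j. P i j - gm M i j)" using P(1) symM by (auto simp: symm_def)
  have kPM: "kills n (\<lambda>i j. P i j - gm M i j) v" if v: "v \<in> ?SA \<union> ?SB" for v
  proof (cases "v \<in> ?SB")
    case True then show ?thesis using kills_diffG kPB kMB by blast
  next
    case False
    then have vA: "v \<in> ?SA" using v by blast
    have "kills n (\<lambda>i j. (gm L i j - gm M i j) - (gm L i j - P i j)) v"
      using kills_diffG kLMA[OF vA] P(5) vA by blast
    moreover have "(\<lambda>i j. (gm L i j - gm M i j) - (gm L i j - P i j)) = (\<lambda>i j. P i j - gm M i j)"
      by (simp add: fun_eq_iff)
    ultimately show ?thesis by simp
  qed
  have trPM: "trp n (\<lambda>i j. P i j - gm M i j) (qm q) = 0" if "q \<in> (IX \<union> IY) \<inter> homog n 2" for q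
  proof (rule key[OF X Y H symPM _ that])
    show "\<forall>s\<in>cf ` ((IX \<union> IY) \<inter> homog n 1). kills n (\<lambda>i j. P i j - gm M i j) s"
      unfolding union using kPM by blast
  qed
  define N2 where "N2 = Lof n P"
  define N1 where "N1 = L - N2"
  have gN2: "\<forall>i\<le>n. \<forall>j\<le>n. gm N2 i j = P i j" using gm_Lof[OF P(1)] by (simp add: N2_def)
  have gN1: "\<forall>i\<le>n. \<forall>j\<le>n. gm N1 i j = gm L i j - P i j" using gN2 by (simp add: N1_def gm_diff)
  have N2h: "N2 \<in> hankel n IY"
  proof -
    have "pairing N2 q = 0" if q: "q \<in> IY \<inter> homog n 2" for q
    proof -
      have "pairing N2 q = trp n P (qm q)" using q pairing_trp[of q n N2] trp_cong[OF gN2] by simp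
      also have "\<dots> = trp n (\<lambda>i j. P i j - gm M i j) (qm q) + trp n (gm M) (qm q)"
        by (simp add: trp_diffG)
      also have "trp n (gm M) (qm q) = pairing M q" using q pairing_trp[of q n M] by simp
      also have "\<dots> = 0" using M(3) q by blast
      finally show ?thesis using trPM q by simp
    qed
    moreover have "psd n (gm N2)" using psd_cong[OF gN2] P(2) by simp
    ultimately show ?thesis using hankel_iff[OF z(2)] keys_Lof N2_def by blast
  qed
  have N1h: "N1 \<in> hankel n IX"
  proof -
    have "pairing N1 q = 0" if q: "q \<in> IX \<inter> homog n 2" for q
    proof -
      have "pairing N1 q = trp n (\<lambda>i j. gm L i j - P i j) (qm q)"
        using q pairing_trp[of q n N1] trp_cong[OF gN1] by simp
      also have "(\<lambda>i j. gm L i j - P i j) = (\<lambda>i j. gm (L - M) i j - (P i j - gm M i j))"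
        by (simp add: fun_eq_iff gm_diff)
      also have "trp n \<dots> (qm q) = trp n (gm (L - M)) (qm q) - trp n (\<lambda>i j. P i j - gm M i j) (qm q)"
        by (rule trp_diffG)
      also have "trp n (gm (L - M)) (qm q) = pairing (L - M) q" using q pairing_trp[of q n "L - M"] by simp
      also have "\<dots> = 0" using M(2) q by blast
      finally show ?thesis using trPM q by simp
    qed
    moreover have "psd n (gm N1)" using psd_cong[OF gN1] P(4) by simp
    moreover have "ks N1 \<subseteq> M2n n" unfolding N1_def using keys_diff[of L N2] hL(1) keys_Lof N2_def by blast
    ultimately show ?thesis using hankel_iff[OF z(1)] by blast
  qed
  have A: "2 *\<^sub>R N1 \<in> hankel n IX" using hankel_cone[OF z(1) N1h N1h, of 2 0] by simp
  have B: "2 *\<^sub>R N2 \<in> hankel n IY" using hankel_cone[OF z(2) N2h N2h, of 2 0] by simp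
  have "(1/2) *\<^sub>R (2 *\<^sub>R N1) + (1/2) *\<^sub>R (2 *\<^sub>R N2) \<in> convex hull (hankel n IX \<union> hankel n IY)"
    by (rule convexD[OF convex_convex_hull]) (use A B in \<open>auto intro: hull_inc\<close>)
  moreover have "(1/2) *\<^sub>R (2 *\<^sub>R N1) + (1/2) *\<^sub>R (2 *\<^sub>R N2) = L" by (simp add: N1_def)
  ultimately show "L \<in> convex hull (hankel n IX \<union> hankel n IY)" by simp
qed

lemma face_part:
  assumes X: "closed_subscheme n IX" and Y: "closed_subscheme n IY"
    and H: "inter_ideal n IX IY = inter_ideal n (span_ideal n IX) (span_ideal n IY)"
  shows "hankel n IX face_of hankel n (IX \<inter> IY)"
proof -
  have iX: "is_ideal n IX" and iY: "is_ideal n IY"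
    using X Y by (auto simp: closed_subscheme_def hom_ideal_def)
  have z: "0 \<in> IX" "0 \<in> IY" "0 \<in> IX \<inter> IY" using iX iY by (auto simp: is_ideal_def)
  show ?thesis unfolding face_of_def
  proof (intro conjI)
    show "hankel n IX \<subseteq> hankel n (IX \<inter> IY)" by (rule hankel_mono[OF z(3) _ z(1)]) blast
    show "convex (hankel n IX)" by (rule convex_hankel[OF z(1)])
    show "\<forall>a\<in>hankel n (IX \<inter> IY). \<forall>b\<in>hankel n (IX \<inter> IY). \<forall>x\<in>hankel n IX.
            x \<in> open_segment a b \<longrightarrow> a \<in> hankel n IX \<and> b \<in> hankel n IX"
    proof (intro ballI impI)
    fix a b x assume a: "a \<in> hankel n (IX \<inter> IY)" and b: "b \<in> hankel n (IX \<inter> IY)"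
      and x: "x \<in> hankel n IX" and seg: "x \<in> open_segment a b"
    obtain u where u: "0 < u" "u < 1" "x = (1 - u) *\<^sub>R a + u *\<^sub>R b" using seg by (auto simp: in_segment)
    have "a \<in> hankel n IX" using face_aux[OF X Y H a b, of "1 - u" u] u x by simp
    moreover have "b \<in> hankel n IX" using face_aux[OF X Y H b a, of u "1 - u"] u x by (simp add: add.commute)
    ultimately show "a \<in> hankel n IX \<and> b \<in> hankel n IX" by simp
    qed
  qed
qed

theorem corollary5p4:
  fixes n :: nat and IX IY :: "rpoly set"
  assumes "closed_subscheme n IX" and "closed_subscheme n IY"
    and "inter_ideal n IX IY = inter_ideal n (span_ideal n IX) (span_ideal n IY)"
  shows "hankel n (IX \<inter> IY) = convex hull (hankel n IX \<union> hankel n IY)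
         \<and> hankel n IX face_of hankel n (IX \<inter> IY)
         \<and> hankel n IY face_of hankel n (IX \<inter> IY)"
proof (intro conjI)
  have iX: "is_ideal n IX" and iY: "is_ideal n IY"
    using assms by (auto simp: closed_subscheme_def hom_ideal_def)
  have z: "0 \<in> IX" "0 \<in> IY" "0 \<in> IX \<inter> IY" using iX iY by (auto simp: is_ideal_def)
  show "hankel n (IX \<inter> IY) = convex hull (hankel n IX \<union> hankel n IY)"
  proof
    show "hankel n (IX \<inter> IY) \<subseteq> convex hull (hankel n IX \<union> hankel n IY)" by (rule hull_part[OF assms])
    have "hankel n IX \<union> hankel n IY \<subseteq> hankel n (IX \<inter> IY)"
      using hankel_mono[OF z(3) _ z(1)] hankel_mono[OF z(3) _ z(2)] by blast
    then show "convex hull (hankel n IX \<union> hankel n IY) \<subseteq> hankel n (IX \<inter> IY)"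
      by (rule hull_minimal) (rule convex_hankel[OF z(3)])
  qed
  show "hankel n IX face_of hankel n (IX \<inter> IY)" by (rule face_part[OF assms])
  have "hankel n IY face_of hankel n (IY \<inter> IX)" by (rule face_part[OF assms(2,1) hyp_sym[OF assms(3)]])
  then show "hankel n IY face_of hankel n (IX \<inter> IY)" by (simp add: Int_commute)
qed


end
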